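(* Let $\mathcal S\in\mathrm{TP}(n)$ and let $C\subseteq[n]$ with $|C|\ge 2$. Let $D$ be the minimal element of $\mathrm{cip}(\mathcal S)$ containing $C$. Then there exist distinct $i,j\in C$ such that $\overline{ij}=D$.
   Context: A rooted tree on leaf set $[n]$ has leaves labeled bijectively by $[n]$ and internal vertices each with at least two children; a clade is the set of leaves below an internal vertex, and $\mathrm{clade}(T)$ is the set of clades (including $[n]$). $\mathrm{TP}(n)$ is the collection of all sets of the form $\mathcal S=\mathrm{clade}(T_1)\cup\mathrm{clade}(T_2)$ for rooted trees $T_1,T_2$ on leaf set $[n]$. The clade intersection poset $\mathrm{cip}(\mathcal S)$ consists of the elements of $\mathcal S$ together with all intersections of elements of $\mathcal S$ that contain at least two elements, partially ordered by inclusion. For a pair $i\ne j$, $\overline{ij}$ denotes the unique smallest element of $\mathrm{cip}(\mathcal S)$ containing $\{i,j\}$ (and, similarly, the minimal element of $\mathrm{cip}(\mathcal S)$ containing a set $C$ with $|C|\ge2$ is the intersection of all elements of $\mathcal S$ containing $C$). *)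

theory Defs
  imports Main
begin

datatype rtree = Leaf nat | Node "rtree list"

fun leaf_list :: "rtree \<Rightarrow> nat list" where
  "leaf_list (Leaf i) = [i]"
| "leaf_list (Node ts) = concat (map leaf_list ts)"

definition leaves :: "rtree \<Rightarrow> nat set" where
  "leaves t = set (leaf_list t)"

fun wf_tree :: "rtree \<Rightarrow> bool" where
  "wf_tree (Leaf i) = True"
| "wf_tree (Node ts) = (2 \<le> length ts \<and> (\<forall>t\<in>set ts. wf_tree t))"

fun clades :: "rtree \<Rightarrow> nat set set" where
  "clades (Leaf i) = {}"
| "clades (Node ts) = insert (set (concat (map leaf_list ts))) (\<Union>t\<in>set ts. clades t)"

definition is_tree_on :: "nat \<Rightarrow> rtree \<Rightarrow> bool" where
  "is_tree_on n T \<longleftrightarrow> wf_tree T \<and> distinct (leaf_list T) \<and> set (leaf_list T) = {1..n}"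

definition clade :: "nat \<Rightarrow> rtree \<Rightarrow> nat set set" where
  "clade n T = insert {1..n} (clades T)"

definition TP :: "nat \<Rightarrow> nat set set set" where
  "TP n = {clade n T1 \<union> clade n T2 | T1 T2. is_tree_on n T1 \<and> is_tree_on n T2}"

text \<open>Clade intersection poset (as a set; ordered by inclusion).\<close>
definition cip :: "nat set set \<Rightarrow> nat set set" where
  "cip S = S \<union> {\<Inter>X | X. X \<subseteq> S \<and> X \<noteq> {} \<and> 2 \<le> card (\<Inter>X)}"

definition is_min_containing :: "nat set set \<Rightarrow> nat set \<Rightarrow> nat set \<Rightarrow> bool" where
  "is_min_containing S C D \<longleftrightarrow> D \<in> cip S \<and> C \<subseteq> D \<and> (\<forall>E\<in>cip S. C \<subseteq> E \<longrightarrow> D \<subseteq> E)"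

end

theory Submission
  imports Defs
begin

lemma clades_sub: "E \<in> clades t \<Longrightarrow> E \<subseteq> set (leaf_list t)"
  by (induction t rule: clades.induct) auto

lemma leaf_nonempty_sub: "t \<in> set ts \<Longrightarrow> set (leaf_list t) \<subseteq> set (leaf_list (Node ts))"
  by auto

lemma disj_child:
  "distinct (concat (map f ts)) \<Longrightarrow> t1 \<in> set ts \<Longrightarrow> t2 \<in> set ts \<Longrightarrow> t1 \<noteq> t2
   \<Longrightarrow> set (f t1) \<inter> set (f t2) = {}"
  by (induction ts) auto

lemma dist_child:
  "distinct (concat (map f ts)) \<Longrightarrow> t \<in> set ts \<Longrightarrow> distinct (f t)"
  by (induction ts) auto

lemma uniq_child:
  assumes "distinct (concat (map leaf_list ts))" "t1 \<in> set ts" "t2 \<in> set ts"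
    "x \<in> set (leaf_list t1)" "x \<in> set (leaf_list t2)"
  shows "t1 = t2"
  using disj_child[OF assms(1-3)] assms(4,5) by blast

lemma tree_main:
  "wf_tree T \<Longrightarrow> distinct (leaf_list T) \<Longrightarrow> C \<subseteq> set (leaf_list T) \<Longrightarrow> 2 \<le> card C \<Longrightarrow>
   \<exists>A\<in>clades T. C \<subseteq> A \<and> (\<exists>g::nat \<Rightarrow> nat set. (\<exists>i\<in>C. \<exists>j\<in>C. g i \<noteq> g j) \<and>
      (\<forall>i\<in>C. \<forall>j\<in>C. g i \<noteq> g j \<longrightarrow> (\<forall>E\<in>clades T. i \<in> E \<and> j \<in> E \<longrightarrow> A \<subseteq> E)))"
proof (induction T arbitrary: C rule: wf_tree.induct)
  case (1 i)
  hence "C \<subseteq> {i}" by simp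
  hence "card C \<le> 1" using card_mono[of "{i}" C] by simp
  with 1 show ?case by simp
next
  case (2 ts)
  have dist: "distinct (concat (map leaf_list ts))" using 2 by simp
  show ?case
  proof (cases "\<exists>t\<in>set ts. C \<subseteq> set (leaf_list t)")
    case True
    then obtain t where t: "t \<in> set ts" "C \<subseteq> set (leaf_list t)" by blast
    have wft: "wf_tree t" using 2 t by simp
    have dt: "distinct (leaf_list t)" using dist t(1) by (rule dist_child)
    have IH: "\<exists>A\<in>clades t. C \<subseteq> A \<and> (\<exists>g::nat \<Rightarrow> nat set. (\<exists>i\<in>C. \<exists>j\<in>C. g i \<noteq> g j) \<and>
      (\<forall>i\<in>C. \<forall>j\<in>C. g i \<noteq> g j \<longrightarrow> (\<forall>E\<in>clades t. i \<in> E \<and> j \<in> E \<longrightarrow> A \<subseteq> E)))"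
      by (rule 2(1)[OF t(1) wft dt t(2) 2(5)])
    then obtain A and g :: "nat \<Rightarrow> nat set" where A: "A \<in> clades t" "C \<subseteq> A" "\<exists>i\<in>C. \<exists>j\<in>C. g i \<noteq> g j"
      "\<forall>i\<in>C. \<forall>j\<in>C. g i \<noteq> g j \<longrightarrow> (\<forall>E\<in>clades t. i \<in> E \<and> j \<in> E \<longrightarrow> A \<subseteq> E)"
      apply -
      apply (erule bexE)
      apply (erule conjE)
      apply (erule exE)
      apply (erule conjE)
      apply (rule that)
         apply assumption+
      done
    have AN: "A \<in> clades (Node ts)" using A t by auto
    have P: "\<forall>i\<in>C. \<forall>j\<in>C. g i \<noteq> g j \<longrightarrow> (\<forall>E\<in>clades (Node ts). i \<in> E \<and> j \<in> E \<longrightarrow> A \<subseteq> E)"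
    proof (intro ballI impI)
      fix i j E assume ij: "i \<in> C" "j \<in> C" "g i \<noteq> g j" and E: "E \<in> clades (Node ts)" "i \<in> E \<and> j \<in> E"
      have Asub: "A \<subseteq> set (leaf_list t)" using clades_sub A by blast
      from E(1) consider "E = set (concat (map leaf_list ts))" | t' where "t' \<in> set ts" "E \<in> clades t'"
        by auto
      then show "A \<subseteq> E"
      proof cases
        case 1 then show ?thesis using Asub t by auto
      next
        case 2
        have "i \<in> set (leaf_list t')" using clades_sub[OF 2(2)] E by auto
        moreover have "i \<in> set (leaf_list t)" using ij t by auto
        ultimately have "t' = t"
          using uniq_child[OF dist 2(1) t(1)] by blast
        then show ?thesis using A ij E 2 by blast
      qed
    qed
    show ?thesis
      apply (rule bexI[OF _ AN])
      apply (rule conjI[OF A(2)])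
      apply (rule exI[of _ g])
      apply (rule conjI[OF A(3) P])
      done
  next
    case False
    define R where "R = set (concat (map leaf_list ts))"
    have RN: "R \<in> clades (Node ts)" unfolding R_def by simp
    have CR: "C \<subseteq> R" using 2 unfolding R_def by simp
    define g where "g i = (SOME L. L \<in> (\<lambda>t. set (leaf_list t)) ` set ts \<and> i \<in> L)" for i
    have gspec: "g i \<in> (\<lambda>t. set (leaf_list t)) ` set ts \<and> i \<in> g i" if "i \<in> C" for i
    proof -
      have "\<exists>L. L \<in> (\<lambda>t. set (leaf_list t)) ` set ts \<and> i \<in> L" using that CR unfolding R_def by auto
      thus ?thesis unfolding g_def by (rule someI_ex)
    qed
    have "C \<noteq> {}" using 2(5) by auto
    then obtain i where i: "i \<in> C" by blast
    then obtain t where t: "t \<in> set ts" "g i = set (leaf_list t)" using gspec by blast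
    obtain j where j: "j \<in> C" "j \<notin> set (leaf_list t)" using False t by blast
    have sep: "g i \<noteq> g j" using gspec[OF j(1)] j t by auto
    have P: "\<forall>i\<in>C. \<forall>j\<in>C. g i \<noteq> g j \<longrightarrow> (\<forall>E\<in>clades (Node ts). i \<in> E \<and> j \<in> E \<longrightarrow> R \<subseteq> E)"
    proof (intro ballI impI)
      fix i j E assume ij: "i \<in> C" "j \<in> C" "g i \<noteq> g j" and E: "E \<in> clades (Node ts)" "i \<in> E \<and> j \<in> E"
      from E(1) consider "E = R" | t' where "t' \<in> set ts" "E \<in> clades t'"
        unfolding R_def by auto
      then show "R \<subseteq> E"
      proof cases
        case 1 then show ?thesis by simp
      next
        case 2
        have ii: "i \<in> set (leaf_list t')" "j \<in> set (leaf_list t')" using clades_sub[OF 2(2)] E by auto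
        obtain ti where ti: "ti \<in> set ts" "g i = set (leaf_list ti)" using gspec[OF ij(1)] by blast
        obtain tj where tj: "tj \<in> set ts" "g j = set (leaf_list tj)" using gspec[OF ij(2)] by blast
        have "ti = t'" using uniq_child[OF dist ti(1) 2(1)] ti gspec[OF ij(1)] ii by auto
        hence "g i = set (leaf_list t')" using ti by simp
        moreover have "tj = t'" using uniq_child[OF dist tj(1) 2(1)] tj gspec[OF ij(2)] ii by auto
        hence "g j = set (leaf_list t')" using tj by simp
        ultimately show ?thesis using ij by simp
      qed
    qed
    show ?thesis
      apply (rule bexI[OF _ RN])
      apply (rule conjI[OF CR])
      apply (rule exI[of _ g])
      apply (rule conjI[OF _ P])
      using i j sep by blast
  qed
qed

lemma tree_obtain:
  assumes "is_tree_on n T" "C \<subseteq> {1..n}" "2 \<le> card C"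
  obtains A and g :: "nat \<Rightarrow> nat set" where "A \<in> clades T" "C \<subseteq> A" "\<exists>i\<in>C. \<exists>j\<in>C. g i \<noteq> g j"
    "\<And>i j E. i \<in> C \<Longrightarrow> j \<in> C \<Longrightarrow> g i \<noteq> g j \<Longrightarrow> E \<in> clades T \<Longrightarrow> i \<in> E \<Longrightarrow> j \<in> E \<Longrightarrow> A \<subseteq> E"
proof -
  have w: "wf_tree T" "distinct (leaf_list T)" "C \<subseteq> set (leaf_list T)"
    using assms unfolding is_tree_on_def by auto
  have IH: "\<exists>A\<in>clades T. C \<subseteq> A \<and> (\<exists>g::nat \<Rightarrow> nat set. (\<exists>i\<in>C. \<exists>j\<in>C. g i \<noteq> g j) \<and>
      (\<forall>i\<in>C. \<forall>j\<in>C. g i \<noteq> g j \<longrightarrow> (\<forall>E\<in>clades T. i \<in> E \<and> j \<in> E \<longrightarrow> A \<subseteq> E)))"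
    by (rule tree_main[OF w assms(3)])
  show ?thesis
    using IH
    apply -
    apply (erule bexE)
    apply (erule conjE)
    apply (erule exE)
    apply (erule conjE)
    apply (rule that)
       apply assumption+
    apply blast
    done
qed

lemma pick2:
  assumes "\<exists>i\<in>C. \<exists>j\<in>C. g1 i \<noteq> g1 j" "\<exists>i\<in>C. \<exists>j\<in>C. g2 i \<noteq> g2 j"
  shows "\<exists>i\<in>C. \<exists>j\<in>C. g1 i \<noteq> g1 j \<and> g2 i \<noteq> g2 j"
proof (rule ccontr)
  assume H: "\<not> ?thesis"
  obtain a b where ab: "a \<in> C" "b \<in> C" "g1 a \<noteq> g1 b" using assms(1) by blast
  have K: "g2 x = g2 a" if "x \<in> C" for x
  proof (cases "g1 x = g1 a")
    case True
    hence "g1 x \<noteq> g1 b" using ab by simp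
    hence "g2 x = g2 b" using H that ab by blast
    moreover have "g2 a = g2 b" using H ab by blast
    ultimately show ?thesis by simp
  next
    case False then show ?thesis using H that ab by blast
  qed
  obtain c d where "c \<in> C" "d \<in> C" "g2 c \<noteq> g2 d" using assms(2) by blast
  with K show False by metis
qed

theorem lemma3p10:
  fixes n :: nat and S :: "nat set set" and C D :: "nat set"
  assumes "S \<in> TP n"
    and "C \<subseteq> {1..n}" and "2 \<le> card C"
    and "is_min_containing S C D"
  shows "\<exists>i\<in>C. \<exists>j\<in>C. i \<noteq> j \<and> is_min_containing S {i, j} D"
proof -
  obtain T1 T2 where S: "S = clade n T1 \<union> clade n T2" and t1: "is_tree_on n T1" and t2: "is_tree_on n T2"
    using assms(1) unfolding TP_def by blast
  have L1: "set (leaf_list T1) = {1..n}" and L2: "set (leaf_list T2) = {1..n}"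
    using t1 t2 unfolding is_tree_on_def by auto
  obtain A1 and g1 :: "nat \<Rightarrow> nat set" where A1: "A1 \<in> clades T1" "C \<subseteq> A1" "\<exists>i\<in>C. \<exists>j\<in>C. g1 i \<noteq> g1 j"
    "\<And>i j E. i \<in> C \<Longrightarrow> j \<in> C \<Longrightarrow> g1 i \<noteq> g1 j \<Longrightarrow> E \<in> clades T1 \<Longrightarrow> i \<in> E \<Longrightarrow> j \<in> E \<Longrightarrow> A1 \<subseteq> E"
    by (rule tree_obtain[OF t1 assms(2,3)], rule that)
  obtain A2 and g2 :: "nat \<Rightarrow> nat set" where A2: "A2 \<in> clades T2" "C \<subseteq> A2" "\<exists>i\<in>C. \<exists>j\<in>C. g2 i \<noteq> g2 j"
    "\<And>i j E. i \<in> C \<Longrightarrow> j \<in> C \<Longrightarrow> g2 i \<noteq> g2 j \<Longrightarrow> E \<in> clades T2 \<Longrightarrow> i \<in> E \<Longrightarrow> j \<in> E \<Longrightarrow> A2 \<subseteq> E"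
    by (rule tree_obtain[OF t2 assms(2,3)], rule that)
  obtain i j where ij: "i \<in> C" "j \<in> C" "g1 i \<noteq> g1 j" "g2 i \<noteq> g2 j"
    using pick2[OF A1(3) A2(3)] by blast
  have A1n: "A1 \<subseteq> {1..n}" using clades_sub[OF A1(1)] L1 by simp
  have A2n: "A2 \<subseteq> {1..n}" using clades_sub[OF A2(1)] L2 by simp
  have A1S: "A1 \<in> S" using A1(1) S unfolding clade_def by auto
  have A2S: "A2 \<in> S" using A2(1) S unfolding clade_def by auto
  have fin: "finite (A1 \<inter> A2)" using A1n finite_subset by blast
  have "card C \<le> card (A1 \<inter> A2)" using card_mono[OF fin] A1(2) A2(2) by blast
  hence c2: "2 \<le> card (\<Inter>{A1, A2})" using assms(3) by simp
  have X: "{A1, A2} \<subseteq> S" "{A1, A2} \<noteq> {}" using A1S A2S by auto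
  have "\<Inter>{A1, A2} \<in> cip S"
    unfolding cip_def apply (rule UnI2) apply (rule CollectI)
    apply (rule exI[of _ "{A1, A2}"]) using X c2 by simp
  hence Acip: "A1 \<inter> A2 \<in> cip S" by simp
  have Dm: "\<forall>E\<in>cip S. C \<subseteq> E \<longrightarrow> D \<subseteq> E" using assms(4) unfolding is_min_containing_def by simp
  have CA: "C \<subseteq> A1 \<inter> A2" using A1(2) A2(2) by simp
  have DA: "D \<subseteq> A1 \<inter> A2" using bspec[OF Dm Acip] CA by (rule mp)
  have H: "A1 \<inter> A2 \<subseteq> E" if "E \<in> S" "i \<in> E" "j \<in> E" for E
  proof -
    have "E \<in> insert {1..n} (clades T1) \<or> E \<in> insert {1..n} (clades T2)"
      using that(1) S unfolding clade_def by auto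
    then consider "E = {1..n}" | "E \<in> clades T1" | "E \<in> clades T2" by blast
    then show ?thesis
    proof cases
      case 1 then show ?thesis using A1n by auto
    next
      case 2 then show ?thesis using A1(4)[OF ij(1,2,3) 2 that(2,3)] by auto
    next
      case 3 then show ?thesis using A2(4)[OF ij(1,2,4) 3 that(2,3)] by auto
    qed
  qed
  have "is_min_containing S {i, j} D"
    unfolding is_min_containing_def
  proof (intro conjI ballI impI)
    show "D \<in> cip S" using assms(4) unfolding is_min_containing_def by blast
    show "{i, j} \<subseteq> D" using assms(4) ij unfolding is_min_containing_def by blast
    fix E assume E: "E \<in> cip S" "{i, j} \<subseteq> E"
    have "A1 \<inter> A2 \<subseteq> E"
    proof (cases "E \<in> S")
      case True then show ?thesis using H E by auto
    next
      case False
      then obtain X where X: "E = \<Inter>X" "X \<subseteq> S" using E(1) unfolding cip_def by blast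
      have "A1 \<inter> A2 \<subseteq> Y" if "Y \<in> X" for Y using H[of Y] that X E(2) by blast
      then show ?thesis using X(1) by blast
    qed
    then show "D \<subseteq> E" using DA by blast
  qed
  moreover have "i \<noteq> j" using ij by auto
  ultimately show ?thesis using ij by blast
qed

end
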